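(* Consider the general load coupling model with JT described in the context. Let $\bm\kappa,\bm\kappa'\in\{0,1\}^{n\times m}$ be JT patterns such that, for some cell $i$ and UE $j$, $\kappa_{ij}=0$, $\kappa'_{ij}=1$, and $\kappa'_{hl}=\kappa_{hl}$ for all $(h,l)\neq(i,j)$. Then for all $\bm{x}\in\mathbb{R}^n_{\ge 0}$, componentwise, $\bm{f}^{\bm\kappa}\big(\bm{h}^{\bm{\kappa'}}(\bm{x})\big)\leq\min\left\{\bm{f}^{\bm\kappa}\big(\bm{h}^{\bm\kappa}(\bm{x})\big),\ \bm{f}^{\bm{\kappa'}}\big(\bm{h}^{\bm{\kappa'}}(\bm{x})\big)\right\}$.
   Context: There are $n$ cells and $m$ UEs. Cell $i$ has transmit power per resource block $p_i>0$, $g_{ij}>0$ is the channel gain between cell $i$ and UE $j$, $d_j>0$ is the (normalized) bitrate demand of UE $j$, and $\sigma^2>0$ is the noise power. A JT pattern is a matrix $\bm\kappa\in\{0,1\}^{n\times m}$, where $\kappa_{ij}=1$ means cell $i$ serves UE $j$; every UE is assumed to be served by at least one cell. For a pattern $\bm\kappa$, the cell load function $\bm f^{\bm\kappa}=(f^{\bm\kappa}_1,\dots,f^{\bm\kappa}_n)$ and SINR function $\bm h^{\bm\kappa}=(h^{\bm\kappa}_1,\dots,h^{\bm\kappa}_m)$ are $f_i^{\bm{\kappa}}(\bm{\gamma})=\sum_{j=1}^{m}\frac{\kappa_{ij}d_j}{\log_2\left(1+\gamma_j\right)}$, $\quad h_j^{\bm{\kappa}}(\bm{x})=\frac{\sum_{i=1}^{n}p_ig_{ij}\kappa_{ij}}{\sum_{k=1}^{n}p_kg_{kj}x_{k}(1-\kappa_{kj})+\sigma^2}$,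 for $\bm\gamma\in\mathbb{R}^m_{>0}$ and $\bm x\in\mathbb{R}^n_{\ge0}$. Inequalities and $\min$ between vectors are componentwise. *)

theory Defs
  imports "HOL-Analysis.Analysis"
begin

text \<open>Cells are indexed by 0..<n, UEs by 0..<m. A JT pattern is a 0/1 matrix,
  represented as a boolean relation kappa i j (cell i serves UE j).\<close>

definition of_pat :: "(nat \<Rightarrow> nat \<Rightarrow> bool) \<Rightarrow> nat \<Rightarrow> nat \<Rightarrow> real" where
  "of_pat \<kappa> i j = (if \<kappa> i j then 1 else 0)"

definition load_f :: "nat \<Rightarrow> (nat \<Rightarrow> real) \<Rightarrow> (nat \<Rightarrow> nat \<Rightarrow> bool) \<Rightarrow> (nat \<Rightarrow> real) \<Rightarrow> nat \<Rightarrow> real" where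
  "load_f m d \<kappa> \<gamma> i = (\<Sum>j<m. of_pat \<kappa> i j * d j / log 2 (1 + \<gamma> j))"

definition sinr_h :: "nat \<Rightarrow> (nat \<Rightarrow> real) \<Rightarrow> (nat \<Rightarrow> nat \<Rightarrow> real) \<Rightarrow> real \<Rightarrow> (nat \<Rightarrow> nat \<Rightarrow> bool) \<Rightarrow> (nat \<Rightarrow> real) \<Rightarrow> nat \<Rightarrow> real" where
  "sinr_h n p g \<sigma>2 \<kappa> x j =
     (\<Sum>i<n. p i * g i j * of_pat \<kappa> i j) /
     ((\<Sum>k<n. p k * g k j * x k * (1 - of_pat \<kappa> k j)) + \<sigma>2)"

end

theory Submission
  imports Defs
begin

lemma of_pat_ge0: "0 \<le> of_pat k a b" and of_pat_le1: "of_pat k a b \<le> 1"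
  by (auto simp: of_pat_def)

lemma num_nonneg:
  assumes "\<And>c. c < n \<Longrightarrow> p c > 0" "\<And>c. c < n \<Longrightarrow> g c l > 0"
  shows "0 \<le> (\<Sum>i<n. p i * g i l * of_pat \<kappa> i l)"
  using assms by (intro sum_nonneg) (simp add: of_pat_ge0 less_imp_le)

lemma den_pos:
  assumes "\<And>c. c < n \<Longrightarrow> p c > 0" "\<And>c. c < n \<Longrightarrow> g c l > 0"
    "\<And>c. c < n \<Longrightarrow> x c \<ge> 0" "\<sigma>2 > 0"
  shows "0 < (\<Sum>k<n. p k * g k l * x k * (1 - of_pat \<kappa> k l)) + \<sigma>2"
proof -
  have "0 \<le> (\<Sum>k<n. p k * g k l * x k * (1 - of_pat \<kappa> k l))"
    using assms by (intro sum_nonneg) (simp add: of_pat_le1 less_imp_le)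
  thus ?thesis using assms(4) by linarith
qed

lemma h_pos:
  assumes "\<And>c. c < n \<Longrightarrow> p c > 0" "\<And>c. c < n \<Longrightarrow> g c l > 0"
    "\<And>c. c < n \<Longrightarrow> x c \<ge> 0" "\<sigma>2 > 0" "\<exists>c<n. \<kappa> c l"
  shows "0 < sinr_h n p g \<sigma>2 \<kappa> x l"
proof -
  obtain c where c: "c < n" "\<kappa> c l" using assms(5) by blast
  have "0 < p c * g c l * of_pat \<kappa> c l" using c assms by (simp add: of_pat_def)
  also have "\<dots> \<le> (\<Sum>i<n. p i * g i l * of_pat \<kappa> i l)"
    using c assms by (intro member_le_sum) (auto simp: of_pat_ge0 less_imp_le)
  moreover have "0 < (\<Sum>k<n. p k * g k l * x k * (1 - of_pat \<kappa> k l)) + \<sigma>2"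
    by (rule den_pos) (use assms in auto)
  ultimately show ?thesis unfolding sinr_h_def by simp
qed

lemma h_mono:
  assumes "\<And>c. c < n \<Longrightarrow> p c > 0" "\<And>c. c < n \<Longrightarrow> g c l > 0"
    "\<And>c. c < n \<Longrightarrow> x c \<ge> 0" "\<sigma>2 > 0" "\<And>k. k < n \<Longrightarrow> \<kappa> k l \<Longrightarrow> \<kappa>' k l"
  shows "sinr_h n p g \<sigma>2 \<kappa> x l \<le> sinr_h n p g \<sigma>2 \<kappa>' x l"
proof -
  have op: "k < n \<Longrightarrow> of_pat \<kappa> k l \<le> of_pat \<kappa>' k l" for k
    using assms(5) by (auto simp: of_pat_def)
  have N: "(\<Sum>i<n. p i * g i l * of_pat \<kappa> i l) \<le> (\<Sum>i<n. p i * g i l * of_pat \<kappa>' i l)"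
    using assms op by (intro sum_mono mult_left_mono) (auto intro: less_imp_le)
  have D: "(\<Sum>k<n. p k * g k l * x k * (1 - of_pat \<kappa>' k l))
      \<le> (\<Sum>k<n. p k * g k l * x k * (1 - of_pat \<kappa> k l))"
  proof (rule sum_mono)
    fix k assume "k \<in> {..<n}"
    hence k: "k < n" by simp
    have "0 \<le> p k * g k l * x k" using assms(1-3)[OF k] by simp
    from mult_left_mono[OF _ this, of "1 - of_pat \<kappa>' k l" "1 - of_pat \<kappa> k l"] op[OF k]
    show "p k * g k l * x k * (1 - of_pat \<kappa>' k l) \<le> p k * g k l * x k * (1 - of_pat \<kappa> k l)"
      by simp
  qed
  have P: "0 < (\<Sum>k<n. p k * g k l * x k * (1 - of_pat \<kappa>' k l)) + \<sigma>2"
    by (rule den_pos) (use assms in auto)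
  have Q: "0 \<le> (\<Sum>i<n. p i * g i l * of_pat \<kappa>' i l)"
    by (rule num_nonneg) (use assms in auto)
  show ?thesis unfolding sinr_h_def
    by (rule frac_le[OF Q N P]) (use D in linarith)
qed

lemma inv_log_anti:
  assumes "0 < a" "a \<le> b" "0 \<le> c"
  shows "c / log 2 (1 + b) \<le> c / log 2 (1 + a)"
proof -
  have "0 < log 2 (1 + a)" using assms by simp
  moreover have "log 2 (1 + a) \<le> log 2 (1 + b)" using assms by simp
  ultimately show ?thesis using assms(3) by (simp add: divide_left_mono)
qed

theorem lemma3:
  fixes n m :: nat
    and p d :: "nat \<Rightarrow> real"
    and g :: "nat \<Rightarrow> nat \<Rightarrow> real"
    and \<sigma>2 :: real
    and \<kappa> \<kappa>' :: "nat \<Rightarrow> nat \<Rightarrow> bool"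
    and i j :: nat
    and x :: "nat \<Rightarrow> real"
  assumes p_pos: "\<And>c. c < n \<Longrightarrow> p c > 0"
    and g_pos: "\<And>c u. c < n \<Longrightarrow> u < m \<Longrightarrow> g c u > 0"
    and d_pos: "\<And>u. u < m \<Longrightarrow> d u > 0"
    and sigma_pos: "\<sigma>2 > 0"
    and served: "\<And>u. u < m \<Longrightarrow> \<exists>c<n. \<kappa> c u"
    and served': "\<And>u. u < m \<Longrightarrow> \<exists>c<n. \<kappa>' c u"
    and ij: "i < n" "j < m"
    and k_ij: "\<not> \<kappa> i j" and k'_ij: "\<kappa>' i j"
    and same: "\<And>h l. h < n \<Longrightarrow> l < m \<Longrightarrow> (h, l) \<noteq> (i, j) \<Longrightarrow> \<kappa>' h l = \<kappa> h l"
    and x_nonneg: "\<And>c. c < n \<Longrightarrow> x c \<ge> 0"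
  shows "\<forall>c<n. load_f m d \<kappa> (sinr_h n p g \<sigma>2 \<kappa>' x) c
            \<le> min (load_f m d \<kappa> (sinr_h n p g \<sigma>2 \<kappa> x) c)
                   (load_f m d \<kappa>' (sinr_h n p g \<sigma>2 \<kappa>' x) c)"
proof (intro allI impI)
  fix c assume c: "c < n"
  have sub: "l < m \<Longrightarrow> k < n \<Longrightarrow> \<kappa> k l \<Longrightarrow> \<kappa>' k l" for k l
    using same[of k l] k_ij by (cases "(k,l) = (i,j)") auto
  have hp: "l < m \<Longrightarrow> 0 < sinr_h n p g \<sigma>2 \<kappa> x l" for l
    by (rule h_pos) (use p_pos g_pos x_nonneg sigma_pos served in auto)
  have hp': "l < m \<Longrightarrow> 0 < sinr_h n p g \<sigma>2 \<kappa>' x l" for l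
    by (rule h_pos) (use p_pos g_pos x_nonneg sigma_pos served' in auto)
  have hm: "l < m \<Longrightarrow> sinr_h n p g \<sigma>2 \<kappa> x l \<le> sinr_h n p g \<sigma>2 \<kappa>' x l" for l
    by (rule h_mono) (use p_pos g_pos x_nonneg sigma_pos sub in auto)
  have A: "load_f m d \<kappa> (sinr_h n p g \<sigma>2 \<kappa>' x) c \<le> load_f m d \<kappa> (sinr_h n p g \<sigma>2 \<kappa> x) c"
    unfolding load_f_def
  proof (rule sum_mono)
    fix l assume "l \<in> {..<m}"
    hence l: "l < m" by simp
    show "of_pat \<kappa> c l * d l / log 2 (1 + sinr_h n p g \<sigma>2 \<kappa>' x l)
        \<le> of_pat \<kappa> c l * d l / log 2 (1 + sinr_h n p g \<sigma>2 \<kappa> x l)"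
      by (rule inv_log_anti[OF hp[OF l] hm[OF l]])
         (use d_pos[OF l] in \<open>simp add: of_pat_ge0\<close>)
  qed
  have B: "load_f m d \<kappa> (sinr_h n p g \<sigma>2 \<kappa>' x) c \<le> load_f m d \<kappa>' (sinr_h n p g \<sigma>2 \<kappa>' x) c"
    unfolding load_f_def
  proof (rule sum_mono)
    fix l assume "l \<in> {..<m}"
    hence l: "l < m" by simp
    have "0 < log 2 (1 + sinr_h n p g \<sigma>2 \<kappa>' x l)" using hp'[OF l] by simp
    hence q: "0 \<le> d l / log 2 (1 + sinr_h n p g \<sigma>2 \<kappa>' x l)"
      using d_pos[OF l] by simp
    have "of_pat \<kappa> c l \<le> of_pat \<kappa>' c l" using sub[OF l c] by (auto simp: of_pat_def)
    from mult_right_mono[OF this q]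
    show "of_pat \<kappa> c l * d l / log 2 (1 + sinr_h n p g \<sigma>2 \<kappa>' x l)
        \<le> of_pat \<kappa>' c l * d l / log 2 (1 + sinr_h n p g \<sigma>2 \<kappa>' x l)"
      by simp
  qed
  show "load_f m d \<kappa> (sinr_h n p g \<sigma>2 \<kappa>' x) c
            \<le> min (load_f m d \<kappa> (sinr_h n p g \<sigma>2 \<kappa> x) c)
                   (load_f m d \<kappa>' (sinr_h n p g \<sigma>2 \<kappa>' x) c)"
    using A B by simp
qed

end
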